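(* Let $m\in\mathbb{N}$ and let $\frac{m+1}{m}\le\lambda<\frac{m}{m-1}$ (for $m=1$ this condition means $2\le\lambda<+\infty$). Let $f(x)=\lfloor\lambda x\rfloor$ for $x\in\mathbb{R}$, with $f^n$ its $n$-fold iterate. Then: - for each $k\in\{0,1,\dots,m-1\}$, $\lim_{n\to\infty}f^n(x)=k$ for all $x\in\left[\frac{k}{\lambda},\frac{k+1}{\lambda}\right)$; - $\lim_{n\to\infty}f^n(x)=-\infty$ for all $x\in(-\infty,0)$; - $\lim_{n\to\infty}f^n(x)=+\infty$ for all $x\in\left[\frac{m}{\lambda},+\infty\right)$.
   Context: $\lfloor x\rfloor=\max\{m\in\mathbb{Z}: m\le x\}$ denotes the floor function; $\mathbb{N}=\{1,2,\dots\}$. *)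

theory Defs
  imports "HOL-Analysis.Analysis"
begin

end

theory Submission
  imports Defs "HOL-Real_Asymp.Real_Asymp"
begin

theorem theorem3:
  fixes m :: nat and lam :: real
  assumes "m \<ge> 1"
    and "real (m + 1) / real m \<le> lam"
    and "m \<ge> 2 \<Longrightarrow> lam < real m / (real m - 1)"
  defines "f \<equiv> (\<lambda>x::real. real_of_int \<lfloor>lam * x\<rfloor>)"
  shows "(\<forall>k::nat. k < m \<longrightarrow>
            (\<forall>x. k / lam \<le> x \<and> x < (k + 1) / lam \<longrightarrow>
                 (\<lambda>n. (f ^^ n) x) \<longlonglongrightarrow> real k))
       \<and> (\<forall>x::real. x < 0 \<longrightarrow> filterlim (\<lambda>n. (f ^^ n) x) at_bot sequentially)
       \<and> (\<forall>x::real. real m / lam \<le> x \<longrightarrow> filterlim (\<lambda>n. (f ^^ n) x) at_top sequentially)"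
proof -
  have mpos: "real m > 0" using assms(1) by simp
  have lm: "lam * real m \<ge> real m + 1"
    using assms(2) mpos by (simp add: field_simps)
  have lam1: "lam > 1"
  proof -
    have "lam * real m > 1 * real m" using lm by simp
    thus ?thesis using mpos by (meson mult_less_cancel_right_pos)
  qed
  have lampos: "lam > 0" using lam1 by simp
  have fix_k: "f (real k) = real k" if "k < m" for k :: nat
  proof -
    have a: "lam * real k \<ge> real k" using lam1 mult_right_mono[of 1 lam "real k"] by simp
    have b: "lam * real k < real k + 1"
    proof (cases "k = 0")
      case True thus ?thesis by simp
    next
      case False
      hence m2: "m \<ge> 2" using that by linarith
      have mm: "real m - 1 > 0" using m2 by simp
      have "lam * (real m - 1) < real m" using assms(3)[OF m2] mm by (simp add: field_simps)
      have "lam * real k * (real m - 1) < real m * real k"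
        using mult_strict_right_mono[OF \<open>lam * (real m - 1) < real m\<close>, of "real k"] False by (simp add: algebra_simps)
      also have "\<dots> \<le> (real k + 1) * (real m - 1)"
        using that by (simp add: algebra_simps)
      finally show ?thesis using mm by (meson mult_less_cancel_right_pos)
    qed
    have "\<lfloor>lam * real k\<rfloor> = int k"
      using a b by (simp add: floor_eq_iff)
    thus ?thesis unfolding f_def by simp
  qed
  have P1: "(\<lambda>n. (f ^^ n) x) \<longlonglongrightarrow> real k"
    if "k < m" "k / lam \<le> x" "x < (k + 1) / lam" for k :: nat and x
  proof -
    have "real k \<le> lam * x" "lam * x < real k + 1"
      using that lampos by (simp_all add: field_simps)
    hence "\<lfloor>lam * x\<rfloor> = int k" by (simp add: floor_eq_iff)
    hence fx: "f x = real k" unfolding f_def by simp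
    have it: "(f ^^ n) (real k) = real k" for n
      by (induction n) (simp_all add: fix_k[OF that(1)])
    have "\<And>n. (f ^^ Suc n) x = real k"
      by (simp add: funpow_Suc_right fx it del: funpow.simps)
    hence "(\<lambda>n. (f ^^ Suc n) x) \<longlonglongrightarrow> real k" by simp
    thus ?thesis by (rule LIMSEQ_imp_Suc)
  qed
  have P2: "filterlim (\<lambda>n. (f ^^ n) x) at_bot sequentially" if "x < 0" for x
  proof -
    have step: "f y < 0 \<and> f y \<le> real_of_int \<lceil>y\<rceil> - 1" if "y < 0" for y
    proof -
      have "lam * y < y" using that lam1 by (simp add: mult_less_cancel_right_neg)
      also have "y \<le> real_of_int \<lceil>y\<rceil>" by simp
      finally have "\<lfloor>lam * y\<rfloor> < \<lceil>y\<rceil>" by linarith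
      moreover have "\<lceil>y\<rceil> \<le> 0" using that by simp
      moreover have "lam * y < 0" using that lampos by (simp add: mult_pos_neg)
      ultimately show ?thesis unfolding f_def by simp
    qed
    have inv: "(f ^^ n) x < 0 \<and> real_of_int \<lceil>(f ^^ n) x\<rceil> \<le> real_of_int \<lceil>x\<rceil> - real n" for n
    proof (induction n)
      case 0 thus ?case using that by simp
    next
      case (Suc n)
      have "f ((f ^^ n) x) = real_of_int \<lfloor>lam * (f ^^ n) x\<rfloor>" unfolding f_def by simp
      hence c: "real_of_int \<lceil>f ((f ^^ n) x)\<rceil> = f ((f ^^ n) x)" by simp
      show ?case unfolding funpow.simps o_apply using step[of "(f ^^ n) x"] Suc.IH c by linarith
    qed
    have bnd: "(f ^^ n) x \<le> real_of_int \<lceil>x\<rceil> - real n" for n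
      using inv[of n] le_of_int_ceiling[of "(f ^^ n) x"] by linarith
    show ?thesis
    proof (rule filterlim_at_bot_mono[OF _ eventuallyI])
      show "(f ^^ n) x \<le> real_of_int \<lceil>x\<rceil> - real n" for n by (rule bnd)
      show "filterlim (\<lambda>n. real_of_int \<lceil>x\<rceil> - real n) at_bot sequentially"
        by real_asymp
    qed
  qed
  have P3: "filterlim (\<lambda>n. (f ^^ n) x) at_top sequentially" if "real m / lam \<le> x" for x
  proof -
    have step: "real m / lam \<le> f y \<and> f y \<ge> real_of_int \<lfloor>y\<rfloor> + 1" if "real m / lam \<le> y" for y
    proof -
      have "lam * y \<ge> real m" using that lampos by (simp add: field_simps)
      hence fm: "f y \<ge> real m" unfolding f_def using floor_mono[of "real m" "lam * y"] by simp
      have "real m / lam \<le> real m" using lam1 mpos by (simp add: field_simps)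
      hence A: "real m / lam \<le> f y" using fm by linarith
      have B: "f y \<ge> real_of_int \<lfloor>y\<rfloor> + 1"
      proof (cases "\<lfloor>y\<rfloor> \<ge> int m")
        case False thus ?thesis using fm by linarith
      next
        case True
        define j where "j = real_of_int \<lfloor>y\<rfloor>"
        have jm: "j \<ge> real m" using True unfolding j_def by linarith
        have "lam * j * real m \<ge> (real m + 1) * j"
          using lm jm mpos by (smt (verit) mult.commute mult.left_commute mult_right_mono)
        also have "(real m + 1) * j \<ge> (j + 1) * real m" using jm by (simp add: algebra_simps)
        finally have "lam * j \<ge> j + 1" using mpos by (meson mult_le_cancel_right_pos)
        moreover have "lam * y \<ge> lam * j" unfolding j_def using lampos by simp
        ultimately have "lam * y \<ge> j + 1" by linarith
        hence "\<lfloor>lam * y\<rfloor> \<ge> \<lfloor>y\<rfloor> + 1" unfolding j_def by (simp add: le_floor_iff)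
        thus ?thesis unfolding f_def by simp
      qed
      show ?thesis using A B by simp
    qed
    have inv: "real m / lam \<le> (f ^^ n) x \<and> real_of_int \<lfloor>(f ^^ n) x\<rfloor> \<ge> real_of_int \<lfloor>x\<rfloor> + real n" for n
    proof (induction n)
      case 0 thus ?case using that by simp
    next
      case (Suc n)
      have "f ((f ^^ n) x) = real_of_int \<lfloor>lam * (f ^^ n) x\<rfloor>" unfolding f_def by simp
      hence c: "real_of_int \<lfloor>f ((f ^^ n) x)\<rfloor> = f ((f ^^ n) x)" by simp
      show ?case unfolding funpow.simps o_apply using step[of "(f ^^ n) x"] Suc.IH c by linarith
    qed
    have bnd: "(f ^^ n) x \<ge> real_of_int \<lfloor>x\<rfloor> + real n" for n
      using inv[of n] of_int_floor_le[of "(f ^^ n) x"] by linarith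
    show ?thesis
    proof (rule filterlim_at_top_mono[OF _ eventuallyI])
      show "real_of_int \<lfloor>x\<rfloor> + real n \<le> (f ^^ n) x" for n by (rule bnd)
      show "filterlim (\<lambda>n. real_of_int \<lfloor>x\<rfloor> + real n) at_top sequentially"
        by real_asymp
    qed
  qed
  show ?thesis using P1 P2 P3 by blast
qed

end
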